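(* In the setting below, fix $j\in[p]$ and suppose $\|\boldsymbol\Theta_{\mathcal N_2}\|_{2\to\infty}\le C_1$, $\|\boldsymbol\Theta^*_{\mathcal N_2}\|_{2\to\infty}\le C_1$, $\|\mathbf A^*\|_{2\to\infty}\le C_2$, $\sigma_r(\mathcal I_{2,j}(\boldsymbol\Theta_{\mathcal N_2}))>0$, and $$\|\mathbf Z_{\mathcal N_2,j}^T\mathrm{diag}(\boldsymbol\Omega_{\mathcal N_2,j})\boldsymbol\Theta_{\mathcal N_2}\|+\|\mathbf B_{2,j}(\boldsymbol\Theta_{\mathcal N_2})\|+\beta_{2,j}(\boldsymbol\Theta_{\mathcal N_2})\kappa_3(3C_1C_2)\le\min\Big\{\frac{\sigma_r^2(\mathcal I_{2,j}(\boldsymbol\Theta_{\mathcal N_2}))}{4\gamma_{2,j}(\boldsymbol\Theta_{\mathcal N_2})\kappa_3(3C_1C_2)},\ \tfrac12\sigma_r(\mathcal I_{2,j}(\boldsymbol\Theta_{\mathcal N_2}))C_2\Big\}$$ (the first term of the minimum read as $+\infty$ if its denominator is $0$). Then there exists $\tilde{\mathbf a}_j\in\mathbb R^r$ with $S_{2,j}(\tilde{\mathbf a}_j;\boldsymbol\Theta_{\mathcal N_2})=\mathbf 0$ and $$\|\tilde{\mathbf a}_j-\mathbf a_j^*\|\le2\sigma_r^{-1}(\mathcal I_{2,j}(\boldsymbol\Theta_{\mathcal N_2}))\big\{\|\mathbf Z_{\mathcal N_2,j}^T\mathrm{diag}(\boldsymbol\Omega_{\mathcal N_2,j})\boldsymbol\Theta_{\mathcal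 N_2}\|+\|\mathbf B_{2,j}(\boldsymbol\Theta_{\mathcal N_2})\|+\beta_{2,j}(\boldsymbol\Theta_{\mathcal N_2})\kappa_3(3C_1C_2)\big\},$$ and moreover $\|\tilde{\mathbf a}_j-\mathbf a_j^*\|\le C_2$.
   Context: Deterministic setting: $\phi>0$; $b:\mathbb R\to\mathbb R$ is three times continuously differentiable with $b''>0$; $\mathcal N_2\subset[n]$ nonempty; $\boldsymbol\Theta^*_{\mathcal N_2}=(\boldsymbol\theta_i^{*T})_{i\in\mathcal N_2}$ and $\boldsymbol\Theta_{\mathcal N_2}=(\boldsymbol\theta_i^{T})_{i\in\mathcal N_2}$ are $|\mathcal N_2|\times r$ matrices, $\mathbf A^*\in\mathbb R^{p\times r}$ with rows $\mathbf a_j^{*T}$, and $m^*_{ij}=\boldsymbol\theta_i^{*T}\mathbf a_j^*$; $C_1,C_2>0$; $y_{ij}\in\mathbb R$, $\omega_{ij}\in\{0,1\}$ are fixed numbers; $z_{ij}=y_{ij}-b'(m^*_{ij})$, $\mathbf Z_{\mathcal N_2,j}=(z_{ij})_{i\in\mathcal N_2}$ (column vector), $\mathrm{diag}(\boldsymbol\Omega_{\mathcal N_2,j})=\mathrm{diag}((\omega_{ij})_{i\in\mathcal N_2})$. $\kappa_3(\alpha)=\sup_{|x|\le\alpha}|b'''(x)|$. Definitions: $S_{2,j}(\mathbf a;\boldsymbol\Theta_{\mathcal N_2})=\phi^{-1}\sum_{i\in\mathcal N_2}\omega_{ij}\{y_{ij}-b'(\mathbf a^T\boldsymbol\theta_i)\}\boldsymbol\theta_i$;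 $\mathbf B_{2,j}(\boldsymbol\Theta_{\mathcal N_2})=\sum_{i\in\mathcal N_2}\omega_{ij}b''(m^*_{ij})\boldsymbol\theta_i(\boldsymbol\theta_i-\boldsymbol\theta_i^* )^T\mathbf a_j^*$; $\mathcal I_{2,j}(\boldsymbol\Theta_{\mathcal N_2})=\sum_{i\in\mathcal N_2}\omega_{ij}b''(m^*_{ij})\boldsymbol\theta_i\boldsymbol\theta_i^T$; $\beta_{2,j}(\boldsymbol\Theta_{\mathcal N_2})=\sup_{\|\mathbf u\|=1}\sum_{i\in\mathcal N_2}\omega_{ij}((\boldsymbol\theta_i-\boldsymbol\theta_i^* )^T\mathbf a_j^* )^2|\boldsymbol\theta_i^T\mathbf u|$; $\gamma_{2,j}(\boldsymbol\Theta_{\mathcal N_2})=\sup_{\|\mathbf u\|=1}\sum_{i\in\mathcal N_2}\omega_{ij}|\boldsymbol\theta_i^T\mathbf u|^3$. $\sigma_r(\cdot)$ is the $r$-th largest singular value; $\|X\|_{2\to\infty}$ the maximal row Euclidean norm. *)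

theory Defs
  imports "HOL-Analysis.Analysis"
begin

text \<open>Vectors in R^r are modelled as real^'r for a finite index type 'r (r = CARD('r)).
  Units i range over a finite nonempty index set N2 of naturals; theta i is the i-th row
  of Theta_{N2}.\<close>

text \<open>r-th largest singular value of an r x r matrix, i.e. the smallest singular value:
  min over unit vectors u of norm (M u).\<close>
definition sigma_min :: "real^'r^'r \<Rightarrow> real" where
  "sigma_min M = Inf {norm (M *v u) | u. norm u = 1}"

text \<open>kappa_3(alpha) = sup_{|x| \<le> alpha} |b'''(x)|, with b3 = b'''.\<close>
definition kappa3 :: "(real \<Rightarrow> real) \<Rightarrow> real \<Rightarrow> real" where
  "kappa3 b3 \<alpha> = Sup {\<bar>b3 x\<bar> | x. \<bar>x\<bar> \<le> \<alpha>}"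

text \<open>Score S_{2,j}(a; Theta): b1 = b', omega_i = omega_ij, y_i = y_ij.\<close>
definition S2 :: "real \<Rightarrow> (real \<Rightarrow> real) \<Rightarrow> nat set \<Rightarrow> (nat \<Rightarrow> real) \<Rightarrow> (nat \<Rightarrow> real)
    \<Rightarrow> (nat \<Rightarrow> real^'r) \<Rightarrow> real^'r \<Rightarrow> real^'r" where
  "S2 \<phi> b1 N2 \<omega> y \<theta> a =
     (1 / \<phi>) *\<^sub>R (\<Sum>i\<in>N2. (\<omega> i * (y i - b1 (a \<bullet> \<theta> i))) *\<^sub>R \<theta> i)"

text \<open>Z^T diag(Omega) Theta, as a vector in R^r, with z_i = y_i - b'(m*_i), m*_i = theta*_i . a*_j.\<close>
definition ZOmegaTheta :: "(real \<Rightarrow> real) \<Rightarrow> nat set \<Rightarrow> (nat \<Rightarrow> real) \<Rightarrow> (nat \<Rightarrow> real)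
    \<Rightarrow> (nat \<Rightarrow> real^'r) \<Rightarrow> (nat \<Rightarrow> real^'r) \<Rightarrow> real^'r \<Rightarrow> real^'r" where
  "ZOmegaTheta b1 N2 \<omega> y \<theta> \<theta>s as =
     (\<Sum>i\<in>N2. (\<omega> i * (y i - b1 (\<theta>s i \<bullet> as))) *\<^sub>R \<theta> i)"

definition B2 :: "(real \<Rightarrow> real) \<Rightarrow> nat set \<Rightarrow> (nat \<Rightarrow> real)
    \<Rightarrow> (nat \<Rightarrow> real^'r) \<Rightarrow> (nat \<Rightarrow> real^'r) \<Rightarrow> real^'r \<Rightarrow> real^'r" where
  "B2 b2 N2 \<omega> \<theta> \<theta>s as =
     (\<Sum>i\<in>N2. (\<omega> i * b2 (\<theta>s i \<bullet> as) * ((\<theta> i - \<theta>s i) \<bullet> as)) *\<^sub>R \<theta> i)"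

definition I2 :: "(real \<Rightarrow> real) \<Rightarrow> nat set \<Rightarrow> (nat \<Rightarrow> real)
    \<Rightarrow> (nat \<Rightarrow> real^'r) \<Rightarrow> (nat \<Rightarrow> real^'r) \<Rightarrow> real^'r \<Rightarrow> real^'r^'r" where
  "I2 b2 N2 \<omega> \<theta> \<theta>s as =
     (\<chi> k l. \<Sum>i\<in>N2. \<omega> i * b2 (\<theta>s i \<bullet> as) * (\<theta> i $ k) * (\<theta> i $ l))"

definition beta2 :: "nat set \<Rightarrow> (nat \<Rightarrow> real)
    \<Rightarrow> (nat \<Rightarrow> real^'r) \<Rightarrow> (nat \<Rightarrow> real^'r) \<Rightarrow> real^'r \<Rightarrow> real" where
  "beta2 N2 \<omega> \<theta> \<theta>s as =
     Sup {\<Sum>i\<in>N2. \<omega> i * ((\<theta> i - \<theta>s i) \<bullet> as)^2 * \<bar>\<theta> i \<bullet> u\<bar> | u. norm u = 1}"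

definition gamma2 :: "nat set \<Rightarrow> (nat \<Rightarrow> real) \<Rightarrow> (nat \<Rightarrow> real^'r) \<Rightarrow> real" where
  "gamma2 N2 \<omega> \<theta> = Sup {\<Sum>i\<in>N2. \<omega> i * \<bar>\<theta> i \<bullet> u\<bar>^3 | u. norm u = 1}"

end

theory Submission
  imports Defs
begin

lemma taylor2:
  fixes b1 b2 b3 :: "real \<Rightarrow> real"
  assumes d2: "\<And>x. (b1 has_real_derivative b2 x) (at x)"
    and d3: "\<And>x. (b2 has_real_derivative b3 x) (at x)"
    and K: "\<And>t. \<bar>t\<bar> \<le> M \<Longrightarrow> \<bar>b3 t\<bar> \<le> K"
    and x: "\<bar>x\<bar> \<le> M" and m: "\<bar>m\<bar> \<le> M"
  shows "\<bar>b1 x - b1 m - b2 m * (x - m)\<bar> \<le> K / 2 * (x - m)^2"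
proof (cases "x = m")
  case True
  then show ?thesis by simp
next
  case False
  define diff where "diff = (\<lambda>k::nat. if k = 0 then b1 else if k = 1 then b2 else b3)"
  have D: "\<forall>k t. k < 2 \<and> min x m \<le> t \<and> t \<le> max x m \<longrightarrow> DERIV (diff k) t :> diff (Suc k) t"
    using d2 d3 by (auto simp: diff_def less_2_cases_iff)
  obtain t where t: "(if x < m then x < t \<and> t < m else m < t \<and> t < x)"
    and eq: "b1 x = (\<Sum>k<2. (diff k m / fact k) * (x - m)^k) + (diff 2 t / fact 2) * (x - m)^2"
    using Taylor[of 2 diff b1 "min x m" "max x m" m x, OF _ _ D] False
    by (auto simp: diff_def)
  have "\<bar>t\<bar> \<le> M" using t x m by (auto split: if_splits)
  hence "\<bar>b3 t\<bar> \<le> K" by (rule K)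
  have eq2: "b1 x - b1 m - b2 m * (x - m) = b3 t / 2 * (x - m)^2"
    using eq by (simp add: diff_def numeral_2_eq_2)
  have "\<bar>b3 t / 2 * (x - m)^2\<bar> = \<bar>b3 t\<bar> / 2 * (x - m)^2" by (simp add: abs_mult)
  also have "\<dots> \<le> K / 2 * (x - m)^2"
    using \<open>\<bar>b3 t\<bar> \<le> K\<close> by (intro mult_right_mono) auto
  finally have "\<bar>b3 t / 2 * (x - m)^2\<bar> \<le> K / 2 * (x - m)^2" .
  then show ?thesis by (simp only: eq2)
qed

lemma amgm3: fixes a b :: real assumes "a \<ge> 0" "b \<ge> 0"
  shows "a^2 * b \<le> (2 * a^3 + b^3) / 3"
proof -
  have "0 \<le> (a - b)^2 * (2*a + b)" using assms by simp
  thus ?thesis by (simp add: algebra_simps power2_eq_square power3_eq_cube)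
qed

lemma exists_unit: "\<exists>u::real^'r. norm u = 1"
  using nonempty_Basis norm_Basis by (metis ex_in_conv)

lemma sum_vec_bound:
  fixes t :: "nat \<Rightarrow> real^'r"
  shows "\<exists>u. norm u = 1 \<and> norm (\<Sum>i\<in>N. c i *\<^sub>R t i) \<le> (\<Sum>i\<in>N. \<bar>c i\<bar> * \<bar>t i \<bullet> u\<bar>)"
proof (cases "(\<Sum>i\<in>N. c i *\<^sub>R t i) = 0")
  case True
  obtain u :: "real^'r" where "norm u = 1" using exists_unit by blast
  then show ?thesis using True by (intro exI[of _ u]) (auto intro: sum_nonneg)
next
  case False
  define S where "S = (\<Sum>i\<in>N. c i *\<^sub>R t i)"
  define u where "u = S /\<^sub>R norm S"
  have nu: "norm u = 1" using False by (simp add: u_def S_def)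
  have "norm S = S \<bullet> u" using False
    by (simp add: u_def S_def inner_commute power2_norm_eq_inner[symmetric] power2_eq_square)
  also have "\<dots> = (\<Sum>i\<in>N. c i * (t i \<bullet> u))" by (simp add: S_def inner_sum_left)
  also have "\<dots> \<le> (\<Sum>i\<in>N. \<bar>c i\<bar> * \<bar>t i \<bullet> u\<bar>)"
    by (intro sum_mono) (metis abs_ge_self abs_mult)
  finally show ?thesis using nu by (auto simp: S_def)
qed

lemma kappa3_upper:
  assumes cont: "continuous_on UNIV b3" and t: "\<bar>t\<bar> \<le> \<alpha>"
  shows "\<bar>b3 t\<bar> \<le> kappa3 b3 \<alpha>"
proof -
  have eq: "{\<bar>b3 x\<bar> | x. \<bar>x\<bar> \<le> \<alpha>} = (\<lambda>x. \<bar>b3 x\<bar>) ` {-\<alpha>..\<alpha>}"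
    by (auto simp: abs_le_iff)
  have "compact ((\<lambda>x. \<bar>b3 x\<bar>) ` {-\<alpha>..\<alpha>})"
    by (intro compact_continuous_image continuous_intros continuous_on_subset[OF cont]) auto
  hence "bdd_above {\<bar>b3 x\<bar> | x. \<bar>x\<bar> \<le> \<alpha>}"
    unfolding eq by (intro bounded_imp_bdd_above compact_imp_bounded)
  thus ?thesis unfolding kappa3_def using t by (intro cSup_upper) auto
qed

lemma gamma2_upper:
  fixes \<theta> :: "nat \<Rightarrow> real^'r"
  assumes fin: "finite N" and w: "\<And>i. w i \<ge> 0" and bd: "\<forall>i\<in>N. norm (\<theta> i) \<le> C"
    and u: "norm u = 1"
  shows "(\<Sum>i\<in>N. w i * \<bar>\<theta> i \<bullet> u\<bar>^3) \<le> gamma2 N w \<theta>"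
proof -
  have "bdd_above {\<Sum>i\<in>N. w i * \<bar>\<theta> i \<bullet> u\<bar>^3 | u::real^'r. norm u = 1}"
  proof (rule bdd_aboveI, clarify)
    fix v :: "real^'r" assume v: "norm v = 1"
    show "(\<Sum>i\<in>N. w i * \<bar>\<theta> i \<bullet> v\<bar>^3) \<le> (\<Sum>i\<in>N. w i * \<bar>C\<bar>^3)"
    proof (intro sum_mono mult_left_mono power_mono)
      fix i assume "i \<in> N"
      have "\<bar>\<theta> i \<bullet> v\<bar> \<le> norm (\<theta> i) * norm v" by (rule Cauchy_Schwarz_ineq2)
      thus "\<bar>\<theta> i \<bullet> v\<bar> \<le> \<bar>C\<bar>" using bd \<open>i \<in> N\<close> v by auto
    qed (auto simp: w)
  qed
  thus ?thesis unfolding gamma2_def using u by (intro cSup_upper) auto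
qed

lemma beta2_upper:
  fixes \<theta> \<theta>s :: "nat \<Rightarrow> real^'r"
  assumes fin: "finite N" and w: "\<And>i. w i \<ge> 0" and bd: "\<forall>i\<in>N. norm (\<theta> i) \<le> C"
    and u: "norm u = 1"
  shows "(\<Sum>i\<in>N. w i * ((\<theta> i - \<theta>s i) \<bullet> as)^2 * \<bar>\<theta> i \<bullet> u\<bar>) \<le> beta2 N w \<theta> \<theta>s as"
proof -
  have "bdd_above {\<Sum>i\<in>N. w i * ((\<theta> i - \<theta>s i) \<bullet> as)^2 * \<bar>\<theta> i \<bullet> u\<bar> | u::real^'r. norm u = 1}"
  proof (rule bdd_aboveI, clarify)
    fix v :: "real^'r" assume v: "norm v = 1"
    show "(\<Sum>i\<in>N. w i * ((\<theta> i - \<theta>s i) \<bullet> as)^2 * \<bar>\<theta> i \<bullet> v\<bar>) \<le> (\<Sum>i\<in>N. w i * ((\<theta> i - \<theta>s i) \<bullet> as)^2 * \<bar>C\<bar>)"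
    proof (intro sum_mono mult_left_mono)
      fix i assume "i \<in> N"
      have "\<bar>\<theta> i \<bullet> v\<bar> \<le> norm (\<theta> i) * norm v" by (rule Cauchy_Schwarz_ineq2)
      thus "\<bar>\<theta> i \<bullet> v\<bar> \<le> \<bar>C\<bar>" using bd \<open>i \<in> N\<close> v by auto
    qed (auto simp: w)
  qed
  thus ?thesis unfolding beta2_def using u by (intro cSup_upper) auto
qed

lemma sigma_min_lower:
  fixes M :: "real^'r^'r"
  shows "sigma_min M * norm u \<le> norm (M *v u)"
proof (cases "u = 0")
  case True then show ?thesis by simp
next
  case False
  define v where "v = u /\<^sub>R norm u"
  have nv: "norm v = 1" using False by (simp add: v_def)
  have "sigma_min M \<le> norm (M *v v)" unfolding sigma_min_def
    using nv by (intro cInf_lower) (auto intro: bdd_belowI[of _ 0])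
  also have "M *v v = (1 / norm u) *\<^sub>R (M *v u)"
    by (simp add: v_def matrix_vector_mult_scaleR divide_inverse_commute)
  finally have "sigma_min M \<le> norm (M *v u) / norm u" using False by simp
  thus ?thesis using False by (simp add: field_simps)
qed

lemma I2_mult:
  "I2 b2 N w \<theta> \<theta>s as *v d = (\<Sum>i\<in>N. (w i * b2 (\<theta>s i \<bullet> as) * (\<theta> i \<bullet> d)) *\<^sub>R \<theta> i)"
  by (simp add: vec_eq_iff matrix_vector_mult_def I2_def sum_component inner_vec_def
      sum_distrib_left sum_distrib_right mult_ac sum.swap[of _ N])

lemma inverse_bound:
  fixes M :: "real^'r^'r"
  assumes "sigma_min M > 0"
  obtains Mi where "\<And>v. M *v (Mi *v v) = v" "\<And>v. norm (Mi *v v) \<le> norm v / sigma_min M"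
proof -
  have "inj ((*v) M)"
  proof (rule injI)
    fix x y assume "M *v x = M *v y"
    hence "M *v (x - y) = 0" by (simp add: matrix_vector_mult_diff_distrib)
    hence "sigma_min M * norm (x - y) \<le> 0" using sigma_min_lower[of M "x - y"] by simp
    thus "x = y" using assms by (simp add: mult_le_0_iff)
  qed
  then obtain B where "B ** M = mat 1" using matrix_left_invertible_injective by blast
  hence MB: "M ** B = mat 1" using matrix_left_right_inverse by blast
  have 1: "M *v (B *v v) = v" for v by (simp add: matrix_vector_mul_assoc MB)
  have 2: "norm (B *v v) \<le> norm v / sigma_min M" for v
    using sigma_min_lower[of M "B *v v"] assms by (simp add: 1 field_simps)
  show ?thesis using 1 2 that by blast
qed

lemma quad_bound:
  fixes \<theta> :: "nat \<Rightarrow> real^'r"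
  assumes fin: "finite N" and w: "\<And>i. w i \<ge> 0" and bd: "\<forall>i\<in>N. norm (\<theta> i) \<le> C"
    and u: "norm u = 1"
  shows "(\<Sum>i\<in>N. w i * (\<theta> i \<bullet> d)^2 * \<bar>\<theta> i \<bullet> u\<bar>) \<le> gamma2 N w \<theta> * (norm d)^2"
proof (cases "d = 0")
  case True
  then show ?thesis by simp
next
  case False
  define v where "v = d /\<^sub>R norm d"
  have nv: "norm v = 1" using False by (simp add: v_def)
  have dv: "\<theta> i \<bullet> d = norm d * (\<theta> i \<bullet> v)" for i using False by (simp add: v_def)
  have eq: "(\<Sum>i\<in>N. w i * (\<theta> i \<bullet> d)^2 * \<bar>\<theta> i \<bullet> u\<bar>) = (norm d)^2 * (\<Sum>i\<in>N. w i * (\<bar>\<theta> i \<bullet> v\<bar>^2 * \<bar>\<theta> i \<bullet> u\<bar>))"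
    by (simp add: dv sum_distrib_left power_mult_distrib mult_ac)
  have "(\<Sum>i\<in>N. w i * (\<bar>\<theta> i \<bullet> v\<bar>^2 * \<bar>\<theta> i \<bullet> u\<bar>)) \<le> (\<Sum>i\<in>N. w i * ((2 * \<bar>\<theta> i \<bullet> v\<bar>^3 + \<bar>\<theta> i \<bullet> u\<bar>^3) / 3))"
    by (intro sum_mono mult_left_mono amgm3) (auto simp: w)
  also have "\<dots> = (\<Sum>i\<in>N. (2 * (w i * \<bar>\<theta> i \<bullet> v\<bar>^3) + w i * \<bar>\<theta> i \<bullet> u\<bar>^3) / 3)"
    by (intro sum.cong) (simp_all add: algebra_simps)
  also have "\<dots> = (\<Sum>i\<in>N. 2 * (w i * \<bar>\<theta> i \<bullet> v\<bar>^3) + w i * \<bar>\<theta> i \<bullet> u\<bar>^3) / 3"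
    by (simp add: sum_divide_distrib)
  also have "\<dots> = (2 * (\<Sum>i\<in>N. w i * \<bar>\<theta> i \<bullet> v\<bar>^3) + (\<Sum>i\<in>N. w i * \<bar>\<theta> i \<bullet> u\<bar>^3)) / 3"
    by (simp add: sum.distrib sum_distrib_left)
  also have "\<dots> \<le> (2 * gamma2 N w \<theta> + gamma2 N w \<theta>) / 3"
    using gamma2_upper[where w=w, OF fin w bd nv] gamma2_upper[where w=w, OF fin w bd u]
    by (intro divide_right_mono add_mono mult_left_mono) auto
  finally have X: "(\<Sum>i\<in>N. w i * (\<bar>\<theta> i \<bullet> v\<bar>^2 * \<bar>\<theta> i \<bullet> u\<bar>)) \<le> gamma2 N w \<theta>" by simp
  show ?thesis unfolding eq using mult_left_mono[OF X, of "(norm d)^2"] by (simp add: mult.commute)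
qed

lemma sq2: fixes a b :: real shows "(a + b)^2 \<le> 2 * (a^2 + b^2)"
proof -
  have "0 \<le> (a - b)^2" by simp
  thus ?thesis by (simp add: power2_eq_square algebra_simps)
qed

theorem mainTheorem11:
  fixes \<phi> C1 C2 :: real
    and b b1 b2 b3 :: "real \<Rightarrow> real"
    and n p j :: nat and N2 :: "nat set"
    and \<theta> \<theta>s :: "nat \<Rightarrow> real^'r" and As :: "nat \<Rightarrow> real^'r"
    and y \<omega> :: "nat \<Rightarrow> nat \<Rightarrow> real"
  assumes phi_pos: "\<phi> > 0"
    and b1: "\<And>x. (b has_real_derivative b1 x) (at x)"
    and b2: "\<And>x. (b1 has_real_derivative b2 x) (at x)"
    and b3: "\<And>x. (b2 has_real_derivative b3 x) (at x)"
    and b3_cont: "continuous_on UNIV b3"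
    and b2_pos: "\<And>x. b2 x > 0"
    and N2_sub: "N2 \<subseteq> {1..n}" and N2_ne: "N2 \<noteq> {}"
    and omega01: "\<And>i k. \<omega> i k \<in> {0, 1}"
    and C1_pos: "C1 > 0" and C2_pos: "C2 > 0"
    and j: "j \<in> {1..p}"
    and Theta_bd: "\<forall>i\<in>N2. norm (\<theta> i) \<le> C1"
    and Thetas_bd: "\<forall>i\<in>N2. norm (\<theta>s i) \<le> C1"
    and As_bd: "\<forall>k\<in>{1..p}. norm (As k) \<le> C2"
    and sigma_pos: "sigma_min (I2 b2 N2 (\<lambda>i. \<omega> i j) \<theta> \<theta>s (As j)) > 0"
    and cond:
      "let \<sigma> = sigma_min (I2 b2 N2 (\<lambda>i. \<omega> i j) \<theta> \<theta>s (As j));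
           \<kappa> = kappa3 b3 (3 * C1 * C2);
           \<gamma> = gamma2 N2 (\<lambda>i. \<omega> i j) \<theta>;
           E = norm (ZOmegaTheta b1 N2 (\<lambda>i. \<omega> i j) (\<lambda>i. y i j) \<theta> \<theta>s (As j))
               + norm (B2 b2 N2 (\<lambda>i. \<omega> i j) \<theta> \<theta>s (As j))
               + beta2 N2 (\<lambda>i. \<omega> i j) \<theta> \<theta>s (As j) * \<kappa>
       in (if \<gamma> * \<kappa> = 0 then E \<le> \<sigma> * C2 / 2
           else E \<le> min (\<sigma>^2 / (4 * \<gamma> * \<kappa>)) (\<sigma> * C2 / 2))"
  shows "\<exists>a :: real^'r.
           S2 \<phi> b1 N2 (\<lambda>i. \<omega> i j) (\<lambda>i. y i j) \<theta> a = 0 \<and>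
           norm (a - As j) \<le> 2 / sigma_min (I2 b2 N2 (\<lambda>i. \<omega> i j) \<theta> \<theta>s (As j)) *
              (norm (ZOmegaTheta b1 N2 (\<lambda>i. \<omega> i j) (\<lambda>i. y i j) \<theta> \<theta>s (As j))
               + norm (B2 b2 N2 (\<lambda>i. \<omega> i j) \<theta> \<theta>s (As j))
               + beta2 N2 (\<lambda>i. \<omega> i j) \<theta> \<theta>s (As j) * kappa3 b3 (3 * C1 * C2)) \<and>
           norm (a - As j) \<le> C2"
proof -
  define w where "w = (\<lambda>i. \<omega> i j)"
  define yy where "yy = (\<lambda>i. y i j)"
  define as where "as = As j"
  define M where "M = I2 b2 N2 w \<theta> \<theta>s as"
  define \<sigma> where "\<sigma> = sigma_min M"
  define \<kappa> where "\<kappa> = kappa3 b3 (3 * C1 * C2)"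
  define \<gamma> where "\<gamma> = gamma2 N2 w \<theta>"
  define \<beta> where "\<beta> = beta2 N2 w \<theta> \<theta>s as"
  define Zv where "Zv = ZOmegaTheta b1 N2 w yy \<theta> \<theta>s as"
  define Bv where "Bv = B2 b2 N2 w \<theta> \<theta>s as"
  define E where "E = norm Zv + norm Bv + \<beta> * \<kappa>"
  have fin: "finite N2" using N2_sub finite_subset by blast
  have w0: "\<And>i. w i \<ge> 0" using omega01 by (auto simp: w_def) (metis empty_iff insert_iff order_refl zero_le_one)
  have asbd: "norm as \<le> C2" using As_bd j by (simp add: as_def)
  have sig: "\<sigma> > 0" using sigma_pos by (simp add: \<sigma>_def M_def w_def as_def)
  have kap0: "\<kappa> \<ge> 0"
    using kappa3_upper[OF b3_cont, of 0 "3 * C1 * C2"] C1_pos C2_pos by (simp add: \<kappa>_def)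
  obtain u0 :: "real^'r" where u0: "norm u0 = 1" using exists_unit by blast
  have gam0: "\<gamma> \<ge> 0"
    using gamma2_upper[where w=w, OF fin w0 Theta_bd u0] unfolding \<gamma>_def
    by (meson order_trans sum_nonneg w0 mult_nonneg_nonneg zero_le_power abs_ge_zero)
  have bet0: "\<beta> \<ge> 0"
    using beta2_upper[where w=w, OF fin w0 Theta_bd u0, where \<theta>s=\<theta>s and as=as] unfolding \<beta>_def
    by (meson order_trans sum_nonneg w0 mult_nonneg_nonneg zero_le_power2 abs_ge_zero)
  have E0: "E \<ge> 0" using kap0 bet0 by (simp add: E_def)
  have condE: "E \<le> \<sigma> * C2 / 2" and condG: "\<gamma> * \<kappa> * (2 * E / \<sigma>)^2 \<le> E"
  proof -
    have c: "if \<gamma> * \<kappa> = 0 then E \<le> \<sigma> * C2 / 2 else E \<le> min (\<sigma>^2 / (4 * \<gamma> * \<kappa>)) (\<sigma> * C2 / 2)"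
      unfolding E_def \<sigma>_def \<kappa>_def \<gamma>_def \<beta>_def Zv_def Bv_def M_def w_def yy_def as_def
      using cond unfolding Let_def by assumption
    show "E \<le> \<sigma> * C2 / 2" using c by (auto split: if_splits)
    show "\<gamma> * \<kappa> * (2 * E / \<sigma>)^2 \<le> E"
    proof (cases "\<gamma> * \<kappa> = 0")
      case True then show ?thesis using E0 by (metis mult_zero_left)
    next
      case False
      hence gk: "\<gamma> * \<kappa> > 0" using gam0 kap0 by simp
      have "E \<le> \<sigma>^2 / (4 * \<gamma> * \<kappa>)" using c False by auto
      hence "4 * \<gamma> * \<kappa> * E \<le> \<sigma>^2" using gk by (simp add: field_simps)
      hence "4 * \<gamma> * \<kappa> * E * E \<le> \<sigma>^2 * E" using E0 by (intro mult_right_mono) auto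
      hence "\<gamma> * \<kappa> * (4 * E^2) / \<sigma>^2 \<le> E" using sig by (simp add: field_simps power2_eq_square)
      thus ?thesis by (simp add: power_divide power_mult_distrib)
    qed
  qed
  have Mv: "\<And>d. M *v d = (\<Sum>i\<in>N2. (w i * b2 (\<theta>s i \<bullet> as) * (\<theta> i \<bullet> d)) *\<^sub>R \<theta> i)"
    unfolding M_def by (rule I2_mult)
  obtain Mi where Mi1: "\<And>v. M *v (Mi *v v) = v" and Mi2: "\<And>v. norm (Mi *v v) \<le> norm v / \<sigma>"
    using inverse_bound[of M] sig unfolding \<sigma>_def by blast
  define F where "F = (\<lambda>a. \<Sum>i\<in>N2. (w i * (yy i - b1 (a \<bullet> \<theta> i))) *\<^sub>R \<theta> i)"
  define R where "R = (\<lambda>d. Zv - Bv - M *v d - F (as + d))"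
  have Rform: "R d = (\<Sum>i\<in>N2. (w i * (b1 ((as + d) \<bullet> \<theta> i) - b1 (\<theta>s i \<bullet> as)
        - b2 (\<theta>s i \<bullet> as) * ((as + d) \<bullet> \<theta> i - \<theta>s i \<bullet> as))) *\<^sub>R \<theta> i)" for d
  proof -
    have "R d = (\<Sum>i\<in>N2. (w i * (yy i - b1 (\<theta>s i \<bullet> as)) - w i * b2 (\<theta>s i \<bullet> as) * ((\<theta> i - \<theta>s i) \<bullet> as)
        - w i * b2 (\<theta>s i \<bullet> as) * (\<theta> i \<bullet> d) - w i * (yy i - b1 ((as + d) \<bullet> \<theta> i))) *\<^sub>R \<theta> i)"
      unfolding R_def Zv_def Bv_def Mv F_def ZOmegaTheta_def B2_def
      by (simp only: sum_subtractf[symmetric] scaleR_diff_left[symmetric])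
    also have "\<dots> = (\<Sum>i\<in>N2. (w i * (b1 ((as + d) \<bullet> \<theta> i) - b1 (\<theta>s i \<bullet> as)
        - b2 (\<theta>s i \<bullet> as) * ((as + d) \<bullet> \<theta> i - \<theta>s i \<bullet> as))) *\<^sub>R \<theta> i)"
    proof (intro sum.cong refl arg_cong2[where f = scaleR])
      fix i
      have e: "(\<theta> i - \<theta>s i) \<bullet> as + \<theta> i \<bullet> d = (as + d) \<bullet> \<theta> i - \<theta>s i \<bullet> as"
        by (simp add: inner_diff_left inner_diff_right inner_add_left inner_add_right inner_commute)
      show "w i * (yy i - b1 (\<theta>s i \<bullet> as)) - w i * b2 (\<theta>s i \<bullet> as) * ((\<theta> i - \<theta>s i) \<bullet> as)
        - w i * b2 (\<theta>s i \<bullet> as) * (\<theta> i \<bullet> d) - w i * (yy i - b1 ((as + d) \<bullet> \<theta> i)) =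
        w i * (b1 ((as + d) \<bullet> \<theta> i) - b1 (\<theta>s i \<bullet> as)
        - b2 (\<theta>s i \<bullet> as) * ((as + d) \<bullet> \<theta> i - \<theta>s i \<bullet> as))"
        by (simp only: e[symmetric]) (simp add: algebra_simps)
    qed
    finally show ?thesis .
  qed
  have Rbd: "norm (R d) \<le> \<kappa> * (\<gamma> * (norm d)^2 + \<beta>)" if nd: "norm d \<le> C2" for d
  proof -
    define e where "e = (\<lambda>i. (\<theta> i - \<theta>s i) \<bullet> as)"
    define c where "c = (\<lambda>i. w i * (b1 ((as + d) \<bullet> \<theta> i) - b1 (\<theta>s i \<bullet> as)
        - b2 (\<theta>s i \<bullet> as) * ((as + d) \<bullet> \<theta> i - \<theta>s i \<bullet> as)))"
    obtain u where u: "norm u = 1" and uR: "norm (R d) \<le> (\<Sum>i\<in>N2. \<bar>c i\<bar> * \<bar>\<theta> i \<bullet> u\<bar>)"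
      using sum_vec_bound[of c \<theta> N2] Rform[of d] unfolding c_def by auto
    have ci: "\<bar>c i\<bar> \<le> w i * (\<kappa> * ((\<theta> i \<bullet> d)^2 + (e i)^2))" if i: "i \<in> N2" for i
    proof -
      have th: "norm (\<theta> i) \<le> C1" "norm (\<theta>s i) \<le> C1" using Theta_bd Thetas_bd i by auto
      have "\<bar>(as + d) \<bullet> \<theta> i\<bar> \<le> norm (as + d) * norm (\<theta> i)" by (rule Cauchy_Schwarz_ineq2)
      also have "\<dots> \<le> (C2 + C2) * C1"
        using norm_triangle_ineq[of as d] asbd nd th C2_pos by (intro mult_mono) auto
      finally have x0: "\<bar>(as + d) \<bullet> \<theta> i\<bar> \<le> (C2 + C2) * C1" .
      have k: "(C2 + C2) * C1 \<le> 3 * C1 * C2" "C1 * C2 \<le> 3 * C1 * C2"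
        using mult_pos_pos[OF C1_pos C2_pos] by (simp_all add: algebra_simps)
      have x: "\<bar>(as + d) \<bullet> \<theta> i\<bar> \<le> 3 * C1 * C2" using x0 k by linarith
      have "\<bar>\<theta>s i \<bullet> as\<bar> \<le> norm (\<theta>s i) * norm as" by (rule Cauchy_Schwarz_ineq2)
      also have "\<dots> \<le> C1 * C2" using th asbd C1_pos by (intro mult_mono) auto
      finally have m0: "\<bar>\<theta>s i \<bullet> as\<bar> \<le> C1 * C2" .
      have m: "\<bar>\<theta>s i \<bullet> as\<bar> \<le> 3 * C1 * C2" using m0 k by linarith
      have T: "\<bar>b1 ((as + d) \<bullet> \<theta> i) - b1 (\<theta>s i \<bullet> as) - b2 (\<theta>s i \<bullet> as) * ((as + d) \<bullet> \<theta> i - \<theta>s i \<bullet> as)\<bar>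
          \<le> \<kappa> / 2 * ((as + d) \<bullet> \<theta> i - \<theta>s i \<bullet> as)^2"
        using taylor2[OF b2 b3 _ x m, of \<kappa>] kappa3_upper[OF b3_cont] unfolding \<kappa>_def by blast
      have ed: "(as + d) \<bullet> \<theta> i - \<theta>s i \<bullet> as = \<theta> i \<bullet> d + e i"
        by (simp add: e_def inner_diff_left inner_diff_right inner_add_left inner_add_right inner_commute)
      have sq: "(\<theta> i \<bullet> d + e i)^2 \<le> 2 * ((\<theta> i \<bullet> d)^2 + (e i)^2)"
        by (rule sq2)
      have "\<bar>c i\<bar> = w i * \<bar>b1 ((as + d) \<bullet> \<theta> i) - b1 (\<theta>s i \<bullet> as) - b2 (\<theta>s i \<bullet> as) * ((as + d) \<bullet> \<theta> i - \<theta>s i \<bullet> as)\<bar>"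
        using w0[of i] by (simp add: c_def abs_mult)
      also have "\<dots> \<le> w i * (\<kappa> / 2 * (2 * ((\<theta> i \<bullet> d)^2 + (e i)^2)))"
      proof (rule mult_left_mono[OF _ w0])
        have "\<kappa> / 2 * (\<theta> i \<bullet> d + e i)^2 \<le> \<kappa> / 2 * (2 * ((\<theta> i \<bullet> d)^2 + (e i)^2))"
          using sq kap0 by (intro mult_left_mono) auto
        thus "\<bar>b1 ((as + d) \<bullet> \<theta> i) - b1 (\<theta>s i \<bullet> as) - b2 (\<theta>s i \<bullet> as) * ((as + d) \<bullet> \<theta> i - \<theta>s i \<bullet> as)\<bar>
          \<le> \<kappa> / 2 * (2 * ((\<theta> i \<bullet> d)^2 + (e i)^2))" using T unfolding ed by linarith
      qed
      also have "w i * (\<kappa> / 2 * (2 * ((\<theta> i \<bullet> d)^2 + (e i)^2))) = w i * (\<kappa> * ((\<theta> i \<bullet> d)^2 + (e i)^2))"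
        by (simp add: field_simps)
      finally show ?thesis .
    qed
    have "norm (R d) \<le> (\<Sum>i\<in>N2. w i * (\<kappa> * ((\<theta> i \<bullet> d)^2 + (e i)^2)) * \<bar>\<theta> i \<bullet> u\<bar>)"
      using uR ci by (meson order_trans sum_mono mult_right_mono abs_ge_zero)
    also have "\<dots> = \<kappa> * (\<Sum>i\<in>N2. w i * (\<theta> i \<bullet> d)^2 * \<bar>\<theta> i \<bullet> u\<bar>) + \<kappa> * (\<Sum>i\<in>N2. w i * (e i)^2 * \<bar>\<theta> i \<bullet> u\<bar>)"
      by (simp add: sum_distrib_left sum.distrib[symmetric] algebra_simps)
    also have "\<dots> \<le> \<kappa> * (\<gamma> * (norm d)^2) + \<kappa> * \<beta>"
      using quad_bound[where w=w, OF fin w0 Theta_bd u, of d] beta2_upper[where w=w, OF fin w0 Theta_bd u, where \<theta>s=\<theta>s and as=as] kap0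
      unfolding \<gamma>_def \<beta>_def e_def by (intro add_mono mult_left_mono) auto
    finally show ?thesis by (simp add: algebra_simps)
  qed
  have cb1: "continuous_on UNIV b1"
    using b2 by (intro continuous_at_imp_continuous_on) (auto intro: DERIV_isCont)
  have cbi: "continuous_on S (\<lambda>d. b1 ((as + d) \<bullet> \<theta> i))" for S i
    by (rule continuous_on_compose2[OF cb1 _ subset_UNIV]) (intro continuous_intros)
  define T where "T = (\<lambda>d. Mi *v (Zv - Bv - R d))"
  have contT: "continuous_on S T" for S
  proof -
    have c1: "continuous_on S (\<lambda>d. \<Sum>i\<in>N2. (w i * (yy i - b1 ((as + d) \<bullet> \<theta> i))) *\<^sub>R \<theta> i)"
      by (intro continuous_on_sum continuous_on_scaleR continuous_on_mult continuous_on_const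
          continuous_on_diff cbi)
    have c2: "continuous_on S (\<lambda>d. M *v d)" by (rule matrix_vector_mult_linear_continuous_on)
    have c3: "continuous_on S (\<lambda>d. Zv - Bv - R d)"
      unfolding R_def F_def by (intro continuous_on_diff continuous_on_const c1 c2)
    show ?thesis unfolding T_def
      by (rule continuous_on_compose2[OF matrix_vector_mult_linear_continuous_on[of UNIV Mi] c3]) auto
  qed
  define \<rho> where "\<rho> = 2 * E / \<sigma>"
  have \<rho>0: "0 \<le> \<rho>" using E0 sig by (simp add: \<rho>_def)
  have \<rho>C: "\<rho> \<le> C2" using condE sig by (simp add: \<rho>_def field_simps)
  have Tmap: "T \<in> cball 0 \<rho> \<rightarrow> cball 0 \<rho>"
  proof
    fix d :: "real^'r" assume "d \<in> cball 0 \<rho>"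
    hence nd: "norm d \<le> \<rho>" by simp
    have d2: "(norm d)^2 \<le> \<rho>^2" using nd by (intro power_mono) auto
    have "\<kappa> * (\<gamma> * (norm d)^2) \<le> \<kappa> * (\<gamma> * \<rho>^2)"
      using d2 kap0 gam0 by (intro mult_left_mono) auto
    also have "\<dots> \<le> E" using condG by (simp add: \<rho>_def mult_ac)
    finally have kg: "\<kappa> * (\<gamma> * (norm d)^2) \<le> E" .
    have "norm (Zv - Bv - R d) \<le> norm Zv + norm Bv + norm (R d)"
      by (metis diff_conv_add_uminus norm_minus_cancel norm_triangle_le norm_triangle_ineq add_mono order_refl)
    also have "\<dots> \<le> norm Zv + norm Bv + \<kappa> * (\<gamma> * (norm d)^2 + \<beta>)"
      using Rbd[of d] nd \<rho>C by simp
    also have "\<dots> \<le> 2 * E" using kg by (simp add: E_def algebra_simps)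
    finally have "norm (Zv - Bv - R d) \<le> 2 * E" .
    hence "norm (T d) \<le> 2 * E / \<sigma>"
      using Mi2[of "Zv - Bv - R d"] sig unfolding T_def by (meson divide_right_mono order_trans less_imp_le)
    thus "T d \<in> cball 0 \<rho>" by (simp add: \<rho>_def)
  qed
  obtain d where dm: "d \<in> cball 0 \<rho>" and fixd: "T d = d"
    using brouwer[OF compact_cball convex_cball _ contT Tmap] \<rho>0 by auto
  have "M *v d = Zv - Bv - R d" using Mi1[of "Zv - Bv - R d"] fixd by (simp add: T_def)
  hence F0: "F (as + d) = 0" unfolding R_def by (simp add: algebra_simps)
  have S0: "S2 \<phi> b1 N2 (\<lambda>i. \<omega> i j) (\<lambda>i. y i j) \<theta> (As j + d) = 0"
    using F0 unfolding S2_def F_def w_def yy_def as_def by simp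
  have nd: "norm d \<le> \<rho>" using dm by simp
  show ?thesis
  proof (intro exI[of _ "As j + d"] conjI S0)
    show "norm (As j + d - As j) \<le> 2 / sigma_min (I2 b2 N2 (\<lambda>i. \<omega> i j) \<theta> \<theta>s (As j)) *
              (norm (ZOmegaTheta b1 N2 (\<lambda>i. \<omega> i j) (\<lambda>i. y i j) \<theta> \<theta>s (As j))
               + norm (B2 b2 N2 (\<lambda>i. \<omega> i j) \<theta> \<theta>s (As j))
               + beta2 N2 (\<lambda>i. \<omega> i j) \<theta> \<theta>s (As j) * kappa3 b3 (3 * C1 * C2))"
      using nd unfolding \<rho>_def E_def \<sigma>_def \<kappa>_def \<gamma>_def \<beta>_def Zv_def Bv_def M_def w_def yy_def as_def
      by simp
    show "norm (As j + d - As j) \<le> C2" using nd \<rho>C by simp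
  qed
qed

end
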